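(* Fix integers $s,t\geq 2$ and a subset $W=\{w_1,w_2,\ldots,w_k\}$ of $\{s+1,s+2,\ldots,st\}$ with $w_1<w_2<\cdots<w_k$. Let $I=\{i_1,\ldots,i_k\}$ with $i_1<\cdots<i_k$ be a set of integers satisfying $w_\ell-s+\ell\leq i_\ell\leq w_\ell-1$ for all $\ell\in[k]$. Define the permutation $\mu=\mu_W(I)=\mu_1\mu_2\cdots\mu_{st}$ of $[st]$ by setting $\mu_{i_\ell}=w_\ell$ for each $\ell\in[k]$ and placing the elements of $[st]\setminus W$ in increasing order in the remaining positions. Then $\mu_W(I)$ is a $321$-avoiding linear extension of $K_{s,t}^\alpha$ whose right-to-left minima are precisely the elements of $[st]\setminus W$.
   Context: $K^\alpha_{s,t}$ is the poset on $[st]$ obtained from the comb $K_{s,t}$ (elements $e_{i,j}$, $1\le i\le s$, $1\le j\le t$, covers $e_{i,1}\lessdot e_{i+1,1}$ and $e_{i,j}\lessdot e_{i,j+1}$) by labeling $e_{i,j}$ with $(j-1)s+i$; equivalently its order is generated by $i\lessdot i+1$ for $1\le i\le s-1$ and $i\lessdot i+s$ for $1\le i\le st-s$. A linear extension is a permutation of $[st]$ in which $x$ precedes $y$ whenever $x<y$ in the poset. An entry $\pi_i$ of a permutation is a right-to-left minimum if $\pi_i<\pi_j$ for all $j>i$. *)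

theory Defs
  imports Main
begin

text \<open>Cover relations of the labelled comb poset K^alpha_{s,t} on [st]:
  i covered by i+1 for 1 <= i <= s-1, and i covered by i+s for 1 <= i <= st-s.\<close>
definition comb_cover :: "nat \<Rightarrow> nat \<Rightarrow> nat \<Rightarrow> nat \<Rightarrow> bool" where
  "comb_cover s t x y \<longleftrightarrow>
     (1 \<le> x \<and> x \<le> s - 1 \<and> y = x + 1) \<or> (1 \<le> x \<and> x + s \<le> s * t \<and> y = x + s)"

definition comb_le :: "nat \<Rightarrow> nat \<Rightarrow> nat \<Rightarrow> nat \<Rightarrow> bool" where
  "comb_le s t = (comb_cover s t)\<^sup>*\<^sup>*"

text \<open>Permutations of [n] are lists; entry pi_i (1-indexed) is pi ! (i-1).\<close>
definition is_perm :: "nat \<Rightarrow> nat list \<Rightarrow> bool" where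
  "is_perm n \<pi> \<longleftrightarrow> distinct \<pi> \<and> set \<pi> = {1..n}"

definition is_linext :: "nat \<Rightarrow> nat \<Rightarrow> nat list \<Rightarrow> bool" where
  "is_linext s t \<pi> \<longleftrightarrow> is_perm (s * t) \<pi> \<and>
     (\<forall>i j. i < length \<pi> \<and> j < length \<pi> \<and> comb_le s t (\<pi> ! i) (\<pi> ! j) \<longrightarrow> i \<le> j)"

definition avoids_321 :: "nat list \<Rightarrow> bool" where
  "avoids_321 \<pi> \<longleftrightarrow>
     \<not> (\<exists>i j k. i < j \<and> j < k \<and> k < length \<pi> \<and> \<pi> ! i > \<pi> ! j \<and> \<pi> ! j > \<pi> ! k)"

definition rl_minima :: "nat list \<Rightarrow> nat set" where
  "rl_minima \<pi> = {\<pi> ! i | i. i < length \<pi> \<and> (\<forall>j. i < j \<and> j < length \<pi> \<longrightarrow> \<pi> ! i < \<pi> ! j)}"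

definition mu_W :: "nat \<Rightarrow> nat set \<Rightarrow> nat set \<Rightarrow> nat list" where
  "mu_W n W I = map (\<lambda>p. if p \<in> I then sorted_list_of_set W ! card {q \<in> I. q < p}
                         else sorted_list_of_set ({1..n} - W) ! card ({1..<p} - I)) [1..<n+1]"

end

theory Submission imports Defs begin

lemma sl_less:
  fixes S :: "nat set"
  assumes "finite S" "i < j" "j < card S"
  shows "sorted_list_of_set S ! i < sorted_list_of_set S ! j"
  using sorted_wrt_nth_less[OF strict_sorted_list_of_set[of S]] assms by simp

lemma sl_in:
  fixes S :: "nat set"
  assumes "finite S" "i < card S"
  shows "sorted_list_of_set S ! i \<in> S"
  using assms by (metis nth_mem length_sorted_list_of_set set_sorted_list_of_set)

lemma sl_less_iff:
  fixes S :: "nat set"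
  assumes "finite S" "i < card S" "j < card S"
  shows "sorted_list_of_set S ! i < sorted_list_of_set S ! j \<longleftrightarrow> i < j"
  using sl_less[OF assms(1)] assms by (metis less_asym linorder_neqE_nat)

lemma nth_rank:
  fixes S :: "nat set"
  assumes "finite S" "r < card S"
  shows "card {y\<in>S. y < sorted_list_of_set S ! r} = r"
proof -
  let ?l = "sorted_list_of_set S"
  have "{y\<in>S. y < ?l ! r} = (\<lambda>i. ?l ! i) ` {..<r}"
  proof
    show "{y \<in> S. y < ?l ! r} \<subseteq> (!) ?l ` {..<r}"
    proof
      fix y assume y: "y \<in> {y \<in> S. y < ?l ! r}"
      then have "y \<in> set ?l" using assms by simp
      then obtain i where i: "i < card S" "y = ?l ! i"
        by (metis in_set_conv_nth length_sorted_list_of_set)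
      then have "i < r" using y sl_less_iff[OF assms(1) i(1) assms(2)] by simp
      then show "y \<in> (!) ?l ` {..<r}" using i by auto
    qed
    show "(!) ?l ` {..<r} \<subseteq> {y \<in> S. y < ?l ! r}"
      using assms sl_in sl_less by auto
  qed
  moreover have "inj_on (\<lambda>i. ?l ! i) {..<r}"
    unfolding inj_on_def using assms sl_less_iff
    by (metis lessThan_iff less_trans nat_neq_iff)
  ultimately show ?thesis by (simp add: card_image)
qed

lemma rank_nth:
  fixes S :: "nat set"
  assumes "finite S" "x \<in> S"
  shows "card {y\<in>S. y < x} < card S \<and> sorted_list_of_set S ! card {y\<in>S. y < x} = x"
proof -
  have "x \<in> set (sorted_list_of_set S)" using assms by simp
  then obtain i where i: "i < card S" "x = sorted_list_of_set S ! i"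
    by (metis in_set_conv_nth length_sorted_list_of_set)
  then show ?thesis using nth_rank[OF assms(1) i(1)] by simp
qed

lemma rank_mono:
  fixes S :: "nat set"
  assumes "finite S" "x \<in> S" "x < y"
  shows "card {z\<in>S. z < x} < card {z\<in>S. z < y}"
  apply (rule psubset_card_mono)
  using assms by auto

lemma nth_less_of_rank:
  fixes S :: "nat set"
  assumes "finite S" "r < card S" "r < card {y\<in>S. y < w}"
  shows "sorted_list_of_set S ! r < w"
proof (rule ccontr)
  assume "\<not> ?thesis"
  then have "{y\<in>S. y < w} \<subseteq> {y\<in>S. y < sorted_list_of_set S ! r}" by auto
  then have "card {y\<in>S. y < w} \<le> r" using nth_rank[OF assms(1,2)]
    by (metis (no_types, lifting) assms(1) card_mono finite_subset mem_Collect_eq subsetI)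
  then show False using assms(3) by simp
qed

theorem lemma2:
  fixes s t :: nat and W I :: "nat set"
  assumes "s \<ge> 2" and "t \<ge> 2"
    and "W \<subseteq> {s+1..s*t}"
    and "finite I" and "card I = card W"
    and "\<forall>l \<in> {1..card W}.
           sorted_list_of_set W ! (l - 1) - s + l \<le> sorted_list_of_set I ! (l - 1) \<and>
           sorted_list_of_set I ! (l - 1) \<le> sorted_list_of_set W ! (l - 1) - 1"
  shows "is_linext s t (mu_W (s*t) W I) \<and> avoids_321 (mu_W (s*t) W I) \<and>
         rl_minima (mu_W (s*t) W I) = {1..s*t} - W"
proof -
  define n where "n = s * t"
  define k where "k = card W"
  define ws where "ws = sorted_list_of_set W"
  define isl where "isl = sorted_list_of_set I"
  define V where "V = {1..n} - W"
  define vs where "vs = sorted_list_of_set V"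
  define J where "J = {1..n} - I"
  define f where "f = (\<lambda>p. if p \<in> I then ws ! card {q \<in> I. q < p}
                         else vs ! card ({1..<p} - I))"
  have mu: "mu_W (s*t) W I = map f [1..<n+1]"
    unfolding mu_W_def f_def n_def ws_def vs_def V_def by simp
  have Wsub: "W \<subseteq> {s+1..n}" using assms(3) n_def by simp
  have finW: "finite W" using Wsub finite_subset by blast
  have finV: "finite V" "finite J" unfolding V_def J_def by auto
  have hb: "\<And>l. l < k \<Longrightarrow> ws!l - s + Suc l \<le> isl!l \<and> isl!l \<le> ws!l - 1"
  proof -
    fix l assume "l < k"
    then have "Suc l \<in> {1..card W}" using k_def by simp
    then show "ws!l - s + Suc l \<le> isl!l \<and> isl!l \<le> ws!l - 1"
      using assms(6) ws_def isl_def by fastforce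
  qed
  have wsin: "\<And>l. l < k \<Longrightarrow> ws!l \<in> W \<and> s+1 \<le> ws!l \<and> ws!l \<le> n"
    using sl_in[OF finW] Wsub k_def ws_def by fastforce
  have islin: "\<And>l. l < k \<Longrightarrow> isl!l \<in> I"
    using sl_in[OF assms(4)] assms(5) k_def isl_def by metis
  have Isub: "I \<subseteq> {1..n}"
  proof
    fix x assume x: "x \<in> I"
    then obtain l where l: "l < k" "x = isl ! l"
      using rank_nth[OF assms(4) x] assms(5) k_def isl_def by metis
    show "x \<in> {1..n}" using hb[OF l(1)] wsin[OF l(1)] l by auto
  qed
  have cardJ: "card J = n - k" unfolding J_def using Isub assms(4,5) k_def
    by (simp add: card_Diff_subset)
  have cardV: "card V = n - k" unfolding V_def using Wsub finW k_def
    by (subst card_Diff_subset) auto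
  have cntI: "\<And>l. l < k \<Longrightarrow> card {q\<in>I. q < isl!l} = l"
    using nth_rank[OF assms(4)] assms(5) k_def isl_def by metis
  have cntW: "\<And>l. l < k \<Longrightarrow> card {q\<in>W. q < ws!l} = l"
    using nth_rank[OF finW] k_def ws_def by metis
  have cntJ: "\<And>l. l < k \<Longrightarrow> card {q\<in>J. q < isl!l} = isl!l - 1 - l"
  proof -
    fix l assume l: "l < k"
    have "{q\<in>J. q < isl!l} = {1..<isl!l} - {q\<in>I. q < isl!l}"
      using Isub islin[OF l] unfolding J_def by auto
    moreover have "{q\<in>I. q < isl!l} \<subseteq> {1..<isl!l}" using Isub by auto
    ultimately show "card {q\<in>J. q < isl!l} = isl!l - 1 - l"
      using cntI[OF l] by (simp add: card_Diff_subset)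
  qed
  have cntV: "\<And>l. l < k \<Longrightarrow> card {q\<in>V. q < ws!l} = ws!l - 1 - l"
  proof -
    fix l assume l: "l < k"
    have "{q\<in>V. q < ws!l} = {1..<ws!l} - {q\<in>W. q < ws!l}"
      using Wsub wsin[OF l] unfolding V_def by auto
    moreover have "{q\<in>W. q < ws!l} \<subseteq> {1..<ws!l}" using Wsub by auto
    ultimately show "card {q\<in>V. q < ws!l} = ws!l - 1 - l"
      using cntW[OF l] finW by (simp add: card_Diff_subset)
  qed
  have fI: "\<And>p. p \<in> I \<Longrightarrow> card {q\<in>I. q < p} < k \<and> f p = ws ! card {q\<in>I. q < p}"
    using rank_nth[OF assms(4)] assms(5) k_def f_def by simp
  have fI2: "\<And>l. l < k \<Longrightarrow> f (isl!l) = ws!l"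
    using fI islin cntI by metis
  have fJ: "\<And>p. p \<in> J \<Longrightarrow> card {q\<in>J. q < p} < card V \<and> f p = vs ! card {q\<in>J. q < p}"
  proof -
    fix p assume p: "p \<in> J"
    have "{1..<p} - I = {q\<in>J. q < p}" using p unfolding J_def by auto
    then show "card {q\<in>J. q < p} < card V \<and> f p = vs ! card {q\<in>J. q < p}"
      using rank_nth[OF finV(2) p] cardJ cardV p unfolding f_def J_def by auto
  qed
  have monoI: "\<And>p q. p \<in> I \<Longrightarrow> q \<in> I \<Longrightarrow> p < q \<Longrightarrow> f p < f q"
    using fI rank_mono[OF assms(4)] sl_less[OF finW] k_def ws_def by metis
  have monoJ: "\<And>p q. p \<in> J \<Longrightarrow> q \<in> J \<Longrightarrow> p < q \<Longrightarrow> f p < f q"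
    using fJ rank_mono[OF finV(2)] sl_less[OF finV(1)] vs_def by metis
  have fIW: "\<And>p. p \<in> I \<Longrightarrow> f p \<in> W"
    using fI sl_in[OF finW] k_def ws_def by metis
  have fJV: "\<And>p. p \<in> J \<Longrightarrow> f p \<in> V"
    using fJ sl_in[OF finV(1)] vs_def by metis
  have U: "\<And>p l. p \<in> J \<Longrightarrow> l < k \<Longrightarrow> p < isl!l \<Longrightarrow> f p < ws!l"
  proof -
    fix p l assume p: "p \<in> J" and l: "l < k" and pl: "p < isl!l"
    have "card {q\<in>J. q < p} < card {q\<in>J. q < isl!l}"
      using rank_mono[OF finV(2) p pl] .
    then have r: "card {q\<in>J. q < p} < ws!l - 1 - l"
      using cntJ[OF l] hb[OF l] by linarith
    show "f p < ws!l"
      using nth_less_of_rank[OF finV(1)] fJ[OF p] r cntV[OF l] vs_def by metis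
  qed
  have L: "\<And>p l. p \<in> J \<Longrightarrow> l < k \<Longrightarrow> f p + s = ws!l \<Longrightarrow> p < isl!l"
  proof (rule ccontr)
    fix p l assume p: "p \<in> J" and l: "l < k" and e: "f p + s = ws!l" and np: "\<not> p < isl!l"
    have pne: "p \<noteq> isl!l" using p islin[OF l] J_def by auto
    have "{q\<in>J. q < isl!l} \<subseteq> {q\<in>J. q < p}" using np pne by auto
    then have "card {q\<in>J. q < isl!l} \<le> card {q\<in>J. q < p}"
      by (simp add: card_mono finV(2))
    then have ge: "card {q\<in>J. q < p} \<ge> f p" using cntJ[OF l] hb[OF l] e by linarith
    have "card {v\<in>V. v < f p} = card {q\<in>J. q < p}"
      using fJ[OF p] nth_rank[OF finV(1)] vs_def by metis
    moreover have "card {v\<in>V. v < f p} \<le> card {1..<f p}"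
      by (rule card_mono) (auto simp: V_def)
    moreover have "f p \<ge> 1" using fJV[OF p] V_def by auto
    ultimately show False using ge by simp
  qed
  have IJ: "\<And>p. p \<in> {1..n} \<Longrightarrow> p \<in> I \<or> p \<in> J" using J_def by auto
  have Isplit: "\<And>p. p \<in> I \<Longrightarrow> \<exists>l<k. p = isl!l"
    using rank_nth[OF assms(4)] assms(5) k_def isl_def by metis
  have fR: "\<And>p. p \<in> {1..n} \<Longrightarrow> f p \<in> {1..n}"
    using IJ fIW fJV Wsub V_def by fastforce
  have inj: "inj_on f {1..n}"
  proof (rule inj_onI)
    fix p q assume p: "p \<in> {1..n}" and q: "q \<in> {1..n}" and e: "f p = f q"
    show "p = q"
    proof (rule ccontr)
      assume "p \<noteq> q"
      then consider "p < q" | "q < p" by linarith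
      then show False
      proof cases
        case 1
        then show False using IJ[OF p] IJ[OF q] monoI monoJ fIW fJV e V_def
          by (metis DiffD2 less_irrefl)
      next
        case 2
        then show False using IJ[OF p] IJ[OF q] monoI monoJ fIW fJV e V_def
          by (metis DiffD2 less_irrefl)
      qed
    qed
  qed
  have img: "f ` {1..n} = {1..n}"
  proof -
    have "f ` {1..n} \<subseteq> {1..n}" using fR by auto
    moreover have "card (f ` {1..n}) = card {1..n}" using card_image[OF inj] .
    ultimately show ?thesis by (simp add: card_subset_eq)
  qed
  have C: "\<And>a b p q. p \<in> {1..n} \<Longrightarrow> q \<in> {1..n} \<Longrightarrow> f p = a \<Longrightarrow> f q = b \<Longrightarrow>
              comb_cover s t a b \<Longrightarrow> p < q"
  proof (rule ccontr)
    fix a b p q assume p: "p \<in> {1..n}" and q: "q \<in> {1..n}" and fa: "f p = a" and fb: "f q = b"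
      and cv: "comb_cover s t a b" and nlt: "\<not> p < q"
    have ab: "a < b" using cv assms(1) unfolding comb_cover_def by auto
    then have "q < p" using nlt fa fb by (metis less_irrefl linorder_neqE_nat)
    from cv consider "a \<le> s - 1" "b = a + 1" | "b = a + s" unfolding comb_cover_def by auto
    then show False
    proof cases
      case 1
      have Wl: "\<forall>x\<in>W. s+1 \<le> x" using Wsub by auto
      have "a \<notin> W" using Wl 1 by fastforce
      then have "p \<in> J" using IJ[OF p] fIW fa by blast
      moreover have "b \<notin> W" using Wl 1 assms(1) by fastforce
      moreover have "q \<in> J" using IJ[OF q] fIW fb calculation(2) by blast
      ultimately show False using monoJ \<open>q < p\<close> fa fb ab by fastforce
    next
      case 2
      consider "p \<in> I" "q \<in> I" | "p \<in> J" "q \<in> J" | "p \<in> I" "q \<in> J" | "p \<in> J" "q \<in> I"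
        using IJ p q by blast
      then show False
      proof cases
        case 1 then show False using monoI \<open>q < p\<close> fa fb ab by fastforce
      next
        case 2 then show False using monoJ \<open>q < p\<close> fa fb ab by fastforce
      next
        case 3
        then obtain l where l: "l < k" "p = isl!l" using Isplit by blast
        have "f q < ws!l" using U[OF 3(2) l(1)] \<open>q < p\<close> l by simp
        then show False using fI2[OF l(1)] l fa fb 2 by simp
      next
        case 4
        then obtain l where l: "l < k" "q = isl!l" using Isplit by blast
        have "p < q" using L[OF 4(1) l(1)] fI2[OF l(1)] l fa fb 2 by simp
        then show False using \<open>q < p\<close> by simp
      qed
    qed
  qed
  have sn: "s \<le> n" using assms(2) n_def by simp
  have R: "comb_le s t a b \<Longrightarrow> a \<in> {1..n} \<Longrightarrow>
      b \<in> {1..n} \<and> (\<forall>p\<in>{1..n}. \<forall>q\<in>{1..n}. f p = a \<longrightarrow> f q = b \<longrightarrow> p \<le> q)" for a b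
    unfolding comb_le_def
  proof (induction rule: rtranclp_induct)
    case base
    show ?case
    proof (intro conjI ballI impI)
      show "a \<in> {1..n}" using base by simp
      fix p q assume "p \<in> {1..n}" "q \<in> {1..n}" "f p = a" "f q = a"
      then show "p \<le> q" using inj inj_onD by (metis order_refl)
    qed
  next
    case (step y z)
    have y: "y \<in> {1..n}" and IH: "\<forall>p\<in>{1..n}. \<forall>q\<in>{1..n}. f p = a \<longrightarrow> f q = y \<longrightarrow> p \<le> q"
      using step.IH step.prems by blast+
    have z: "z \<in> {1..n}"
    proof -
      have "(1 \<le> y \<and> y \<le> s - 1 \<and> z = y + 1) \<or> (1 \<le> y \<and> y + s \<le> n \<and> z = y + s)"
        using step.hyps(2) unfolding comb_cover_def n_def by simp
      then show ?thesis using sn assms(1) by auto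
    qed
    obtain r where r: "r \<in> {1..n}" "f r = y" using y img by (metis imageE)
    show ?case
    proof (intro conjI ballI impI)
      show "z \<in> {1..n}" by (rule z)
      fix p q assume p: "p \<in> {1..n}" and q: "q \<in> {1..n}" and "f p = a" "f q = z"
      then have "p \<le> r" using IH r by blast
      moreover have "r < q" using C[OF r(1) q r(2) \<open>f q = z\<close> step.hyps(2)] .
      ultimately show "p \<le> q" by simp
    qed
  qed
  have CH: "\<And>p. p \<in> {1..n} \<Longrightarrow> (\<forall>q\<in>{1..n}. p < q \<longrightarrow> f p < f q) \<longleftrightarrow> p \<in> J"
  proof
    fix p assume p: "p \<in> {1..n}" and H: "\<forall>q\<in>{1..n}. p < q \<longrightarrow> f p < f q"
    show "p \<in> J"
    proof (rule ccontr)
      assume "p \<notin> J"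
      then have pI: "p \<in> I" using IJ p by blast
      then obtain l where l: "l < k" "p = isl!l" using Isplit by blast
      define w where "w = f p"
      have w: "w = ws!l" unfolding w_def l(2) by (rule fI2[OF l(1)])
      define A where "A = {q\<in>{1..n}. f q < w}"
      have "f ` A = {1..<w}"
      proof
        show "f ` A \<subseteq> {1..<w}"
        proof
          fix x assume "x \<in> f ` A"
          then obtain q where "q \<in> {1..n}" "f q < w" "x = f q" unfolding A_def by blast
          then show "x \<in> {1..<w}" using fR[of q] by simp
        qed
        show "{1..<w} \<subseteq> f ` A"
        proof
          fix x assume x: "x \<in> {1..<w}"
          then have "x \<in> {1..n}" using wsin[OF l(1)] w by simp
          then obtain q where "q \<in> {1..n}" "f q = x" using img by (metis imageE)
          then show "x \<in> f ` A" using x unfolding A_def by force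
        qed
      qed
      moreover have "inj_on f A" by (rule inj_on_subset[OF inj]) (auto simp add: A_def)
      ultimately have cA: "card A = w - 1" using card_image by fastforce
      have "A \<subseteq> {1..<p}"
      proof
        fix q assume q: "q \<in> A"
        then have qn: "q \<in> {1..n}" "f q < f p" unfolding A_def w_def by auto
        then have "q \<noteq> p" by auto
        moreover have "\<not> p < q" using H qn by auto
        ultimately show "q \<in> {1..<p}" using qn by simp
      qed
      then have "card A \<le> card {1..<p}" by (intro card_mono) auto
      then have "card A \<le> p - 1" by simp
      then show False using cA hb[OF l(1)] l w wsin[OF l(1)] by linarith
    qed
  next
    fix p assume p: "p \<in> {1..n}" and pJ: "p \<in> J"
    show "\<forall>q\<in>{1..n}. p < q \<longrightarrow> f p < f q"
    proof (intro ballI impI)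
      fix q assume q: "q \<in> {1..n}" and pq: "p < q"
      show "f p < f q"
      proof (cases "q \<in> J")
        case True then show ?thesis using monoJ pJ pq by blast
      next
        case False
        then obtain l where l: "l < k" "q = isl!l" using Isplit IJ q by blast
        then show ?thesis using U[OF pJ l(1)] pq fI2 by simp
      qed
    qed
  qed
  have len: "length (map f [1..<n+1]) = n" by (simp del: upt_Suc)
  have nth: "\<And>i. i < n \<Longrightarrow> map f [1..<n+1] ! i = f (Suc i)" by (simp del: upt_Suc)
  have sU: "set [1..<n+1] = {1..n}" by (simp del: upt_Suc add: atLeastLessThanSuc_atLeastAtMost)
  have perm: "is_perm (s*t) (map f [1..<n+1])"
    unfolding is_perm_def n_def[symmetric] using inj img sU
    by (simp del: upt_Suc add: distinct_map)
  have linext: "is_linext s t (map f [1..<n+1])"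
    unfolding is_linext_def
  proof (intro conjI perm allI impI)
    fix i j assume h: "i < length (map f [1..<n + 1]) \<and> j < length (map f [1..<n + 1]) \<and>
         comb_le s t (map f [1..<n + 1] ! i) (map f [1..<n + 1] ! j)"
    then have i: "Suc i \<in> {1..n}" and j: "Suc j \<in> {1..n}" using len by auto
    have ei: "map f [1..<n+1] ! i = f (Suc i)" by (rule nth) (use i in simp)
    have ej: "map f [1..<n+1] ! j = f (Suc j)" by (rule nth) (use j in simp)
    have "comb_le s t (f (Suc i)) (f (Suc j))" using h unfolding ei ej by blast
    then have "\<forall>p\<in>{1..n}. \<forall>q\<in>{1..n}. f p = f (Suc i) \<longrightarrow> f q = f (Suc j) \<longrightarrow> p \<le> q"
      using R fR[OF i] by blast
    then have "Suc i \<le> Suc j" using i j by blast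
    then show "i \<le> j" by simp
  qed
  have av: "avoids_321 (map f [1..<n+1])"
    unfolding avoids_321_def
  proof
    assume "\<exists>i j ka. i < j \<and> j < ka \<and> ka < length (map f [1..<n + 1]) \<and>
      map f [1..<n + 1] ! j < map f [1..<n + 1] ! i \<and> map f [1..<n + 1] ! ka < map f [1..<n + 1] ! j"
    then obtain i j m where h0: "i < j" "j < m" "m < length (map f [1..<n + 1])"
      "map f [1..<n + 1] ! j < map f [1..<n + 1] ! i" "map f [1..<n + 1] ! m < map f [1..<n + 1] ! j"
      by blast
    have mn: "m < n" using h0(3) len by simp
    have h: "i < j" "j < m" "m < n" "f (Suc j) < f (Suc i)" "f (Suc m) < f (Suc j)"
      using h0 mn nth[of i] nth[of j] nth[of m] by simp_all
    have p: "Suc i \<in> {1..n}" "Suc j \<in> {1..n}" "Suc m \<in> {1..n}" using h by auto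
    show False using IJ[OF p(1)] IJ[OF p(2)] IJ[OF p(3)] monoI monoJ h
      by (metis Suc_less_eq less_asym less_trans)
  qed
  define pi where "pi = map f [1..<n+1]"
  have lenp: "length pi = n" using len pi_def by simp
  have nthp: "\<And>i. i < n \<Longrightarrow> pi ! i = f (Suc i)" using nth pi_def by simp
  have rl: "rl_minima pi = V"
  proof
    show "rl_minima pi \<subseteq> V"
    proof
      fix x assume "x \<in> rl_minima pi"
      then obtain i where i0: "i < length pi" "x = pi ! i" and H0: "\<forall>j. i < j \<and> j < length pi \<longrightarrow> pi ! i < pi ! j"
        unfolding rl_minima_def by blast
      have i: "i < n" "x = f (Suc i)" using i0 lenp nthp by auto
      have H: "\<forall>j. i < j \<and> j < n \<longrightarrow> f (Suc i) < f (Suc j)"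
        using H0 lenp nthp i by auto
      have "\<forall>q\<in>{1..n}. Suc i < q \<longrightarrow> f (Suc i) < f q"
      proof (intro ballI impI)
        fix q assume "q \<in> {1..n}" "Suc i < q"
        then show "f (Suc i) < f q" using H[rule_format, of "q - 1"] by (simp add: Suc_lessI less_diff_conv)
      qed
      then have "Suc i \<in> J" using CH i by auto
      then show "x \<in> V" using fJV i by simp
    qed
    show "V \<subseteq> rl_minima pi"
    proof
      fix x assume x: "x \<in> V"
      then have "x \<in> {1..n}" using V_def by auto
      then obtain p where p: "p \<in> {1..n}" "f p = x" using img by (metis imageE)
      then have "p \<in> J" using IJ fIW x V_def by blast
      then have H: "\<forall>q\<in>{1..n}. p < q \<longrightarrow> f p < f q" using CH p by blast
      have a1: "p - 1 < length pi" "pi ! (p - 1) = x" using p nthp[of "p-1"] lenp by auto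
      moreover have "\<forall>j. p - 1 < j \<and> j < length pi \<longrightarrow> pi ! (p - 1) < pi ! j"
      proof (intro allI impI)
        fix j assume "p - 1 < j \<and> j < length pi"
        then show "pi ! (p - 1) < pi ! j" using H p nthp[of j] a1 lenp by auto
      qed
      ultimately show "x \<in> rl_minima pi"
        unfolding rl_minima_def by blast
    qed
  qed
  show ?thesis unfolding mu pi_def[symmetric] using linext av rl V_def n_def pi_def by simp
qed

end
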